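(* Suppose $X$ is a polyhedron and $\Lambda\subsetneq\Lambda_X^\star(\mathcal{A})$ is a proper subset. Then there exists $\tilde y\in\mathbb{R}^{\mathcal{A}}$ such that $\phi_{\lambda'}(\tilde y)\ge0$ for all $\lambda'\in\Lambda$, and $\phi_\lambda(\tilde y)<0$ for some $\lambda\in\Lambda_X^\star(\mathcal{A})\setminus\Lambda$.
   Context: $X\subset\mathbb{R}^n$ is a nonempty closed convex set and $\mathcal{A}\subset\mathbb{R}^n$ is a nonempty finite set such that the functions $x\mapsto\exp(\alpha^Tx)$, $\alpha\in\mathcal{A}$, are linearly independent on $X$. $\mathbb{R}^{\mathcal{A}}$ denotes real vectors indexed by $\mathcal{A}$. $\mathcal{A}\nu=\sum_\alpha\alpha\nu_\alpha$. $\sigma_X(y)=\sup\{y^Tx:x\in X\}$. $N_\beta=\{\nu\in\mathbb{R}^{\mathcal{A}}:\nu_\alpha\ge0\ \forall\alpha\neq\beta,\ \sum_\alpha\nu_\alpha=0\}$. A vector $\nu^\star\in N_\beta$ is an $X$-circuit of $\mathcal{A}$ if (1) $\nu^\star\neq0$, (2) $\sigma_X(-\mathcal{A}\nu^\star)<\infty$, and (3) $\nu^\star$ cannot be written as a convex combination of two non-proportional vectors $\nu^{(1)},\nu^{(2)}\in N_\beta$ such that the map $\nu\mapsto\sigma_X(-\mathcal{A}\nu)$ is affine on the segment $[\nu^{(1)},\nu^{(2)}]$. $\Lambda_X(\mathcal{A})$ is the set of all $X$-circuits $\lambda$ (over all $\beta\in\mathcal{A}$) normalized so that the unique negative entry equals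 $-1$. The functional form of $\lambda\in\Lambda_X(\mathcal{A})$ is the affine function $\phi_\lambda(y)=\sum_\alpha y_\alpha\lambda_\alpha+\sigma_X(-\mathcal{A}\lambda)$ on $\mathbb{R}^{\mathcal{A}}$, also identified with the vector $(\lambda,\sigma_X(-\mathcal{A}\lambda))\in\mathbb{R}^{\mathcal{A}}\times\mathbb{R}$. The circuit graph is $G_X(\mathcal{A})=\operatorname{cone}(\{\phi_\lambda:\lambda\in\Lambda_X(\mathcal{A})\}\cup\{(0,1)\})$. The set of normalized reduced $X$-circuits $\Lambda_X^\star(\mathcal{A})$ consists of those $\lambda\in\Lambda_X(\mathcal{A})$ for which $\{t\phi_\lambda:t\ge0\}$ is an extreme ray of $G_X(\mathcal{A})$. *)

theory Defs
  imports "HOL-Analysis.Analysis"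
begin

text \<open>Vectors in R^A are functions 'a => real vanishing outside the finite set A.\<close>

definition RA :: "'a set \<Rightarrow> ('a \<Rightarrow> real) set" where
  "RA A = {v. \<forall>a. a \<notin> A \<longrightarrow> v a = 0}"

definition sigmaX :: "'a::real_inner set \<Rightarrow> 'a \<Rightarrow> ereal" where
  "sigmaX X y = (SUP x\<in>X. ereal (inner y x))"

definition Amap :: "'a::real_vector set \<Rightarrow> ('a \<Rightarrow> real) \<Rightarrow> 'a" where
  "Amap A v = (\<Sum>a\<in>A. v a *\<^sub>R a)"

definition Nbeta :: "'a set \<Rightarrow> 'a \<Rightarrow> ('a \<Rightarrow> real) set" where
  "Nbeta A b = {v \<in> RA A. (\<forall>a\<in>A. a \<noteq> b \<longrightarrow> v a \<ge> 0) \<and> sum v A = 0}"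

definition proportional :: "('a \<Rightarrow> real) \<Rightarrow> ('a \<Rightarrow> real) \<Rightarrow> bool" where
  "proportional u v \<longleftrightarrow> (\<exists>c. u = (\<lambda>a. c * v a)) \<or> (\<exists>c. v = (\<lambda>a. c * u a))"

definition sigma_affine_on_segment ::
  "'a::real_inner set \<Rightarrow> 'a set \<Rightarrow> ('a \<Rightarrow> real) \<Rightarrow> ('a \<Rightarrow> real) \<Rightarrow> bool" where
  "sigma_affine_on_segment X A v1 v2 \<longleftrightarrow>
     (\<forall>t\<in>{0..1::real}.
        sigmaX X (- Amap A (\<lambda>a. (1 - t) * v1 a + t * v2 a)) =
          ereal (1 - t) * sigmaX X (- Amap A v1) + ereal t * sigmaX X (- Amap A v2))"

definition X_circuit :: "'a::real_inner set \<Rightarrow> 'a set \<Rightarrow> 'a \<Rightarrow> ('a \<Rightarrow> real) \<Rightarrow> bool" where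
  "X_circuit X A b v \<longleftrightarrow>
     b \<in> A \<and> v \<in> Nbeta A b \<and> v \<noteq> (\<lambda>_. 0) \<and>
     sigmaX X (- Amap A v) < \<infinity> \<and>
     \<not> (\<exists>v1\<in>Nbeta A b. \<exists>v2\<in>Nbeta A b. \<not> proportional v1 v2 \<and>
          (\<exists>\<theta>::real. 0 < \<theta> \<and> \<theta> < 1 \<and> v = (\<lambda>a. \<theta> * v1 a + (1 - \<theta>) * v2 a)) \<and>
          sigma_affine_on_segment X A v1 v2)"

definition Lambda_X :: "'a::real_inner set \<Rightarrow> 'a set \<Rightarrow> ('a \<Rightarrow> real) set" where
  "Lambda_X X A = {l. \<exists>b\<in>A. X_circuit X A b l \<and> l b = -1}"

definition phi :: "'a::real_inner set \<Rightarrow> 'a set \<Rightarrow> ('a \<Rightarrow> real) \<Rightarrow> ('a \<Rightarrow> real) \<Rightarrow> real" where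
  "phi X A l y = (\<Sum>a\<in>A. y a * l a) + real_of_ereal (sigmaX X (- Amap A l))"

definition phi_vec :: "'a::real_inner set \<Rightarrow> 'a set \<Rightarrow> ('a \<Rightarrow> real) \<Rightarrow> ('a \<Rightarrow> real) \<times> real" where
  "phi_vec X A l = (l, real_of_ereal (sigmaX X (- Amap A l)))"

definition circuit_graph :: "'a::real_inner set \<Rightarrow> 'a set \<Rightarrow> (('a \<Rightarrow> real) \<times> real) set" where
  "circuit_graph X A =
     {p. \<exists>S c c0. finite S \<and> S \<subseteq> Lambda_X X A \<and> (\<forall>s\<in>S. c s \<ge> (0::real)) \<and> c0 \<ge> (0::real) \<and>
        p = ((\<lambda>a. \<Sum>s\<in>S. c s * fst (phi_vec X A s) a),
             (\<Sum>s\<in>S. c s * snd (phi_vec X A s)) + c0)}"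

definition ray :: "('a \<Rightarrow> real) \<times> real \<Rightarrow> (('a \<Rightarrow> real) \<times> real) set" where
  "ray p = {((\<lambda>a. t * fst p a), t * snd p) | t. t \<ge> (0::real)}"

definition padd :: "('a \<Rightarrow> real) \<times> real \<Rightarrow> ('a \<Rightarrow> real) \<times> real \<Rightarrow> ('a \<Rightarrow> real) \<times> real" where
  "padd u v = ((\<lambda>a. fst u a + fst v a), snd u + snd v)"

definition extreme_ray :: "(('a \<Rightarrow> real) \<times> real) set \<Rightarrow> (('a \<Rightarrow> real) \<times> real) set \<Rightarrow> bool" where
  "extreme_ray R G \<longleftrightarrow> R \<subseteq> G \<and> (\<exists>r\<in>R. r \<noteq> ((\<lambda>_. 0), 0)) \<and>
     (\<forall>u\<in>G. \<forall>v\<in>G. padd u v \<in> R \<longrightarrow> u \<in> R \<and> v \<in> R)"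

definition Lambda_star :: "'a::real_inner set \<Rightarrow> 'a set \<Rightarrow> ('a \<Rightarrow> real) set" where
  "Lambda_star X A = {l \<in> Lambda_X X A. extreme_ray (ray (phi_vec X A l)) (circuit_graph X A)}"

definition exp_lin_indep :: "'a::real_inner set \<Rightarrow> 'a set \<Rightarrow> bool" where
  "exp_lin_indep X A \<longleftrightarrow>
     (\<forall>c. (\<forall>x\<in>X. (\<Sum>a\<in>A. c a * exp (inner a x)) = 0) \<longrightarrow> (\<forall>a\<in>A. c a = 0))"

end

theory Submission
  imports Defs
begin


lemma farkas_coord:
  fixes v :: "'i \<Rightarrow> 'j \<Rightarrow> real" and w :: "'j \<Rightarrow> real"
  assumes "finite I" "finite J"
    and "\<not> (\<exists>c. (\<forall>i\<in>I. 0 \<le> c i) \<and> (\<forall>j\<in>J. w j = (\<Sum>i\<in>I. c i * v i j)))"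
  shows "\<exists>y. (\<forall>i\<in>I. 0 \<le> (\<Sum>j\<in>J. y j * v i j)) \<and> (\<Sum>j\<in>J. y j * w j) < 0"
  using assms(1,3)
proof (induction I arbitrary: v w rule: finite_induct)
  case empty
  then obtain j where j: "j\<in>J" "w j \<noteq> 0" by auto
  have "0 < (\<Sum>j\<in>J. w j * w j)"
    by (rule sum_pos2[OF assms(2) j(1)]) (use j in \<open>auto simp: zero_less_mult_iff linorder_neq_iff\<close>)
  then have "(\<Sum>j\<in>J. (- w j) * w j) < 0" by (simp add: sum_negf)
  then show ?case by (intro exI[of _ "\<lambda>j. - w j"]) simp
next
  case (insert m I)
  have ncI: "\<not> (\<exists>c. (\<forall>i\<in>I. 0 \<le> c i) \<and> (\<forall>j\<in>J. w j = (\<Sum>i\<in>I. c i * v i j)))"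
  proof
    assume "\<exists>c. (\<forall>i\<in>I. 0 \<le> c i) \<and> (\<forall>j\<in>J. w j = (\<Sum>i\<in>I. c i * v i j))"
    then obtain c where c: "\<forall>i\<in>I. 0 \<le> c i" "\<forall>j\<in>J. w j = (\<Sum>i\<in>I. c i * v i j)" by blast
    define c' where "c' = c(m := 0)"
    have "\<forall>i\<in>insert m I. 0 \<le> c' i" using c(1) by (auto simp: c'_def)
    moreover have "\<forall>j\<in>J. w j = (\<Sum>i\<in>insert m I. c' i * v i j)"
    proof
      fix j assume "j \<in> J"
      have "(\<Sum>i\<in>insert m I. c' i * v i j) = (\<Sum>i\<in>I. c' i * v i j)"
        using insert.hyps by (simp add: c'_def)
      also have "\<dots> = (\<Sum>i\<in>I. c i * v i j)"
        using insert.hyps by (intro sum.cong) (auto simp: c'_def)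
      finally show "w j = (\<Sum>i\<in>insert m I. c' i * v i j)" using c(2) \<open>j\<in>J\<close> by simp
    qed
    ultimately show False using insert.prems by blast
  qed
  from insert.IH[OF ncI] obtain y where
    y: "\<forall>i\<in>I. 0 \<le> (\<Sum>j\<in>J. y j * v i j)" "(\<Sum>j\<in>J. y j * w j) < 0" by blast
  define s where "s i = (\<Sum>j\<in>J. y j * v i j)" for i
  define yw where "yw = (\<Sum>j\<in>J. y j * w j)"
  show ?case
  proof (cases "0 \<le> s m")
    case True
    then show ?thesis using y by (auto simp: s_def)
  next
    case False
    then have sm: "s m < 0" by simp
    define v' where "v' i j = s i * v m j - s m * v i j" for i j
    define w' where "w' j = yw * v m j - s m * w j" for j
    have nc': "\<not> (\<exists>c. (\<forall>i\<in>I. 0 \<le> c i) \<and> (\<forall>j\<in>J. w' j = (\<Sum>i\<in>I. c i * v' i j)))"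
    proof
      assume "\<exists>c. (\<forall>i\<in>I. 0 \<le> c i) \<and> (\<forall>j\<in>J. w' j = (\<Sum>i\<in>I. c i * v' i j))"
      then obtain c where c: "\<forall>i\<in>I. 0 \<le> c i" "\<forall>j\<in>J. w' j = (\<Sum>i\<in>I. c i * v' i j)" by blast
      define cs where "cs = (\<Sum>i\<in>I. c i * s i)"
      have cs0: "0 \<le> cs" unfolding cs_def using c(1) y(1) by (auto intro!: sum_nonneg simp: s_def)
      define c' where "c' = c(m := (cs - yw) / (- s m))"
      have yw0: "yw < 0" using y(2) by (simp add: yw_def)
      have "\<forall>i\<in>insert m I. 0 \<le> c' i"
        using c(1) cs0 yw0 sm by (auto simp: c'_def intro!: divide_nonneg_neg)
      moreover have "\<forall>j\<in>J. w j = (\<Sum>i\<in>insert m I. c' i * v i j)"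
      proof
        fix j assume "j \<in> J"
        have "(\<Sum>i\<in>insert m I. c' i * v i j) = c' m * v m j + (\<Sum>i\<in>I. c' i * v i j)"
          using insert.hyps by simp
        also have "(\<Sum>i\<in>I. c' i * v i j) = (\<Sum>i\<in>I. c i * v i j)"
          using insert.hyps by (intro sum.cong) (auto simp: c'_def)
        finally have e1: "(\<Sum>i\<in>insert m I. c' i * v i j) = (cs - yw) / (- s m) * v m j + (\<Sum>i\<in>I. c i * v i j)"
          by (simp add: c'_def)
        have "w' j = (\<Sum>i\<in>I. c i * (s i * v m j - s m * v i j))" using c(2) \<open>j\<in>J\<close> by (simp add: v'_def)
        also have "\<dots> = cs * v m j - s m * (\<Sum>i\<in>I. c i * v i j)"
          by (simp add: cs_def algebra_simps sum_subtractf sum_distrib_left sum_distrib_right)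
        finally have "yw * v m j - s m * w j = cs * v m j - s m * (\<Sum>i\<in>I. c i * v i j)"
          by (simp add: w'_def)
        then have "w j = (cs - yw) / (- s m) * v m j + (\<Sum>i\<in>I. c i * v i j)"
          using sm by (simp add: field_simps)
        then show "w j = (\<Sum>i\<in>insert m I. c' i * v i j)" using e1 by simp
      qed
      ultimately show False using insert.prems by blast
    qed
    from insert.IH[OF nc'] obtain y' where
      y': "\<forall>i\<in>I. 0 \<le> (\<Sum>j\<in>J. y' j * v' i j)" "(\<Sum>j\<in>J. y' j * w' j) < 0" by blast
    define t where "t = (\<Sum>j\<in>J. y' j * v m j)"
    define z where "z j = t * y j - s m * y' j" for j
    have zv: "(\<Sum>j\<in>J. z j * u j) = t * (\<Sum>j\<in>J. y j * u j) - s m * (\<Sum>j\<in>J. y' j * u j)" for u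
      by (simp add: z_def algebra_simps sum_subtractf sum_distrib_left)
    have y'v: "(\<Sum>j\<in>J. y' j * v' i j) = s i * t - s m * (\<Sum>j\<in>J. y' j * v i j)" for i
      by (simp add: v'_def t_def algebra_simps sum_subtractf sum_distrib_left)
    have y'w: "(\<Sum>j\<in>J. y' j * w' j) = yw * t - s m * (\<Sum>j\<in>J. y' j * w j)"
      by (simp add: w'_def t_def algebra_simps sum_subtractf sum_distrib_left)
    have "\<forall>i\<in>insert m I. 0 \<le> (\<Sum>j\<in>J. z j * v i j)"
    proof
      fix i assume "i \<in> insert m I"
      then show "0 \<le> (\<Sum>j\<in>J. z j * v i j)"
      proof
        assume "i = m" then show ?thesis by (simp add: zv t_def s_def)
      next
        assume "i \<in> I"
        then have "0 \<le> s i * t - s m * (\<Sum>j\<in>J. y' j * v i j)" using y'(1) y'v by metis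
        then show ?thesis by (simp add: zv s_def mult.commute)
      qed
    qed
    moreover have "(\<Sum>j\<in>J. z j * w j) = (\<Sum>j\<in>J. y' j * w' j)"
      by (simp only: zv y'w yw_def) (simp add: algebra_simps)
    then have "(\<Sum>j\<in>J. z j * w j) < 0" using y'(2) by simp
    ultimately show ?thesis by blast
  qed
qed


lemma sum_opt:
  assumes "finite F"
  shows "(\<Sum>k\<in>insert None (Some ` F). g k) = g None + (\<Sum>h\<in>F. g (Some h))"
  using assms by (simp add: sum.reindex)

definition ecoord :: "'a::euclidean_space \<times> real \<Rightarrow> 'a option \<Rightarrow> real" where
  "ecoord p j = (case j of None \<Rightarrow> snd p | Some i \<Rightarrow> fst p \<bullet> i)"

lemma ecoord_sum:
  fixes p :: "'a::euclidean_space \<times> real"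
  shows "(\<Sum>j\<in>insert None (Some ` Basis). y j * ecoord p j)
     = inner (\<Sum>i\<in>Basis. y (Some i) *\<^sub>R i) (fst p) + y None * snd p"
  unfolding sum_opt[OF finite_Basis] by (simp add: ecoord_def inner_sum_left inner_sum_right inner_commute)

lemma farkas_euclid:
  fixes q :: "'k \<Rightarrow> 'a::euclidean_space \<times> real" and p :: "'a \<times> real"
  assumes "finite K"
    and "\<not> (\<exists>c. (\<forall>k\<in>K. 0 \<le> c k) \<and> fst p = (\<Sum>k\<in>K. c k *\<^sub>R fst (q k)) \<and> snd p = (\<Sum>k\<in>K. c k * snd (q k)))"
  shows "\<exists>Y t. (\<forall>k\<in>K. 0 \<le> inner Y (fst (q k)) + t * snd (q k)) \<and> inner Y (fst p) + t * snd p < 0"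
proof -
  let ?J = "insert None (Some ` (Basis::'a set))"
  have nc: "\<not> (\<exists>c. (\<forall>k\<in>K. 0 \<le> c k) \<and> (\<forall>j\<in>?J. ecoord p j = (\<Sum>k\<in>K. c k * ecoord (q k) j)))"
  proof
    assume "\<exists>c. (\<forall>k\<in>K. 0 \<le> c k) \<and> (\<forall>j\<in>?J. ecoord p j = (\<Sum>k\<in>K. c k * ecoord (q k) j))"
    then obtain c where c: "\<forall>k\<in>K. 0 \<le> c k" "\<forall>j\<in>?J. ecoord p j = (\<Sum>k\<in>K. c k * ecoord (q k) j)" by blast
    have "fst p = (\<Sum>k\<in>K. c k *\<^sub>R fst (q k))"
    proof (rule euclidean_eqI)
      fix i :: 'a assume "i \<in> Basis"
      then have "ecoord p (Some i) = (\<Sum>k\<in>K. c k * ecoord (q k) (Some i))" using c(2) by blast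
      then show "fst p \<bullet> i = (\<Sum>k\<in>K. c k *\<^sub>R fst (q k)) \<bullet> i"
        by (simp add: ecoord_def inner_sum_left)
    qed
    moreover have "snd p = (\<Sum>k\<in>K. c k * snd (q k))"
      using c(2) by (auto simp: ecoord_def)
    ultimately show False using assms(2) c(1) by blast
  qed
  obtain y where y: "\<forall>k\<in>K. 0 \<le> (\<Sum>j\<in>?J. y j * ecoord (q k) j)" "(\<Sum>j\<in>?J. y j * ecoord p j) < 0"
    using farkas_coord[OF assms(1) _ nc] by auto
  show ?thesis
    using y by (intro exI[of _ "\<Sum>i\<in>Basis. y (Some i) *\<^sub>R i"] exI[of _ "y None"]) (simp add: ecoord_sum)
qed




lemma lp_attain:
  fixes aa :: "'h \<Rightarrow> 'a::euclidean_space" and bb :: "'h \<Rightarrow> real"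
  assumes F: "finite F" and X: "X = {x. \<forall>h\<in>F. aa h \<bullet> x \<le> bb h}" and ne: "X \<noteq> {}"
    and ub: "\<forall>x\<in>X. z \<bullet> x \<le> s" and apx: "\<forall>\<epsilon>>0. \<exists>x\<in>X. s - \<epsilon> < z \<bullet> x"
  shows "\<exists>x\<in>X. z \<bullet> x = s"
proof (rule ccontr)
  assume na: "\<not> ?thesis"
  define q where "q k = (case k of None \<Rightarrow> (-z, -s) | Some h \<Rightarrow> (aa h, bb h))" for k
  let ?K = "insert None (Some ` F)"
  show False
  proof (cases "\<exists>c. (\<forall>k\<in>?K. 0 \<le> c k) \<and> fst (0::'a, -1::real) = (\<Sum>k\<in>?K. c k *\<^sub>R fst (q k)) \<and> snd (0::'a,-1::real) = (\<Sum>k\<in>?K. c k * snd (q k))")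
    case True
    then obtain c where c: "\<forall>k\<in>?K. 0 \<le> c k" "0 = (\<Sum>k\<in>?K. c k *\<^sub>R fst (q k))" "-1 = (\<Sum>k\<in>?K. c k * snd (q k))"
      by auto
    from c(2) have "0 = - (c None *\<^sub>R z) + (\<Sum>h\<in>F. c (Some h) *\<^sub>R aa h)"
      by (simp add: sum_opt[OF F] q_def)
    then have e1: "c None *\<^sub>R z = (\<Sum>h\<in>F. c (Some h) *\<^sub>R aa h)"
      by (simp add: eq_neg_iff_add_eq_0 add.commute)
    from c(3) have e2: "(\<Sum>h\<in>F. c (Some h) * bb h) = c None * s - 1"
      by (simp add: sum_opt[OF F] q_def)
    have bound: "c None * (z \<bullet> x) \<le> c None * s - 1" if "x \<in> X" for x
    proof -
      have "c None * (z \<bullet> x) = (c None *\<^sub>R z) \<bullet> x" by simp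
      also have "\<dots> = (\<Sum>h\<in>F. c (Some h) * (aa h \<bullet> x))" by (simp add: e1 inner_sum_left)
      also have "\<dots> \<le> (\<Sum>h\<in>F. c (Some h) * bb h)"
        using that c(1) X by (intro sum_mono mult_left_mono) auto
      finally show ?thesis using e2 by simp
    qed
    obtain x0 where x0: "x0 \<in> X" using ne by blast
    have cN: "0 \<le> c None" using c(1) by simp
    show False
    proof (cases "c None = 0")
      case True then show False using bound[OF x0] by simp
    next
      case False
      then have pos: "0 < c None" using cN by simp
      then obtain x where x: "x \<in> X" "s - 1 / c None < z \<bullet> x" using apx[rule_format, of "1 / c None"] by auto
      have "c None * (z \<bullet> x) \<le> c None * s - 1" using bound[OF x(1)] .
      then have "z \<bullet> x \<le> s - 1 / c None" using pos by (simp add: field_simps)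
      then show False using x(2) by simp
    qed
  next
    case False
    have "finite ?K" using F by simp
    from farkas_euclid[OF this False] obtain Y t where
      Yt: "\<forall>k\<in>?K. 0 \<le> inner Y (fst (q k)) + t * snd (q k)" "inner Y 0 + t * (-1) < 0" by auto
    have t: "0 < t" using Yt(2) by simp
    define x where "x = - (1 / t) *\<^sub>R Y"
    have "x \<in> X"
    proof -
      have "aa h \<bullet> x \<le> bb h" if "h \<in> F" for h
      proof -
        have "0 \<le> Y \<bullet> aa h + t * bb h" using Yt(1) that by (auto simp: q_def)
        then show ?thesis using t by (simp add: x_def inner_commute field_simps)
      qed
      then show ?thesis using X by auto
    qed
    moreover have "s \<le> z \<bullet> x"
    proof -
      have "0 \<le> - (Y \<bullet> z) - t * s" using Yt(1) by (auto simp: q_def)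
      then show ?thesis using t by (simp add: x_def inner_commute field_simps)
    qed
    ultimately show False using na ub by (meson order_antisym)
  qed
qed

lemma lp_dual:
  fixes aa :: "'h \<Rightarrow> 'a::euclidean_space" and bb :: "'h \<Rightarrow> real"
  assumes F: "finite F" and X: "X = {x. \<forall>h\<in>F. aa h \<bullet> x \<le> bb h}"
    and ub: "\<forall>x\<in>X. z \<bullet> x \<le> s" and xs: "xs \<in> X" "z \<bullet> xs = s"
  shows "\<exists>\<mu>. (\<forall>h\<in>F. 0 \<le> \<mu> h) \<and> z = (\<Sum>h\<in>F. \<mu> h *\<^sub>R aa h) \<and> (\<forall>h\<in>F. \<mu> h \<noteq> 0 \<longrightarrow> aa h \<bullet> xs = bb h)"
proof -
  define q where "q k = (case k of None \<Rightarrow> (0::'a, 1::real) | Some h \<Rightarrow> (aa h, bb h))" for k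
  let ?K = "insert None (Some ` F)"
  show ?thesis
  proof (cases "\<exists>c. (\<forall>k\<in>?K. 0 \<le> c k) \<and> fst (z, s) = (\<Sum>k\<in>?K. c k *\<^sub>R fst (q k)) \<and> snd (z, s) = (\<Sum>k\<in>?K. c k * snd (q k))")
    case True
    then obtain c where c: "\<forall>k\<in>?K. 0 \<le> c k" "z = (\<Sum>k\<in>?K. c k *\<^sub>R fst (q k))" "s = (\<Sum>k\<in>?K. c k * snd (q k))"
      by auto
    define \<mu> where "\<mu> h = c (Some h)" for h
    have z: "z = (\<Sum>h\<in>F. \<mu> h *\<^sub>R aa h)" using c(2) by (simp add: sum_opt[OF F] q_def \<mu>_def)
    have s: "s = c None + (\<Sum>h\<in>F. \<mu> h * bb h)" using c(3) by (simp add: sum_opt[OF F] q_def \<mu>_def)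
    have mu0: "\<forall>h\<in>F. 0 \<le> \<mu> h" using c(1) by (simp add: \<mu>_def)
    have "s = z \<bullet> xs" using xs(2) by simp
    also have "\<dots> = (\<Sum>h\<in>F. \<mu> h * (aa h \<bullet> xs))" by (subst z) (simp add: inner_sum_left)
    finally have s2: "s = (\<Sum>h\<in>F. \<mu> h * (aa h \<bullet> xs))" .
    have "(\<Sum>h\<in>F. \<mu> h * (bb h - aa h \<bullet> xs)) = (\<Sum>h\<in>F. \<mu> h * bb h) - (\<Sum>h\<in>F. \<mu> h * (aa h \<bullet> xs))"
      by (simp add: right_diff_distrib sum_subtractf)
    then have "(\<Sum>h\<in>F. \<mu> h * (bb h - aa h \<bullet> xs)) = - c None"
      using s s2 by linarith
    moreover have nn: "\<forall>h\<in>F. 0 \<le> \<mu> h * (bb h - aa h \<bullet> xs)" using mu0 xs(1) X by auto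
    moreover have "0 \<le> (\<Sum>h\<in>F. \<mu> h * (bb h - aa h \<bullet> xs))" using nn by (simp add: sum_nonneg)
    moreover have "0 \<le> c None" using c(1) by simp
    ultimately have "(\<Sum>h\<in>F. \<mu> h * (bb h - aa h \<bullet> xs)) = 0" by linarith
    then have "\<forall>h\<in>F. \<mu> h * (bb h - aa h \<bullet> xs) = 0"
      by (subst (asm) sum_nonneg_eq_0_iff[OF F]) (use nn in auto)
    then have "\<forall>h\<in>F. \<mu> h \<noteq> 0 \<longrightarrow> aa h \<bullet> xs = bb h" by auto
    then show ?thesis using mu0 z by blast
  next
    case False
    have "finite ?K" using F by simp
    from farkas_euclid[OF this False] obtain Y t where
      Yt: "\<forall>k\<in>?K. 0 \<le> inner Y (fst (q k)) + t * snd (q k)" "inner Y z + t * s < 0" by auto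
    have t: "0 \<le> t" using Yt(1) by (auto simp: q_def)
    have Yh: "0 \<le> Y \<bullet> aa h + t * bb h" if "h \<in> F" for h using Yt(1) that by (auto simp: q_def)
    show ?thesis
    proof (cases "t = 0")
      case False
      then have t: "0 < t" using t by simp
      define x where "x = - (1 / t) *\<^sub>R Y"
      have "x \<in> X"
      proof -
        have "aa h \<bullet> x \<le> bb h" if "h \<in> F" for h
          using Yh[OF that] t by (simp add: x_def inner_commute field_simps)
        then show ?thesis using X by auto
      qed
      moreover have "s < z \<bullet> x"
        using Yt(2) t by (simp add: x_def inner_commute field_simps)
      ultimately have False using ub by fastforce
      then show ?thesis ..
    next
      case True
      define lam where "lam = 1 / (- (Y \<bullet> z))"
      have Yz: "Y \<bullet> z < 0" using Yt(2) True by simp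
      then have lam: "0 < lam" by (simp add: lam_def)
      define x where "x = xs - lam *\<^sub>R Y"
      have "x \<in> X"
      proof -
        have "aa h \<bullet> x \<le> bb h" if "h \<in> F" for h
        proof -
          have "0 \<le> Y \<bullet> aa h" using Yh[OF that] True by simp
          moreover have "aa h \<bullet> xs \<le> bb h" using xs(1) X that by auto
          moreover have "0 \<le> lam * (Y \<bullet> aa h)" using lam calculation(1) by simp
          ultimately show ?thesis
            by (simp add: x_def inner_diff_right inner_commute)
        qed
        then show ?thesis using X by auto
      qed
      moreover have "z \<bullet> x = s + 1"
      proof -
        have "z \<bullet> x = z \<bullet> xs - lam * (Y \<bullet> z)" by (simp add: x_def inner_diff_right inner_commute)
        also have "lam * (Y \<bullet> z) = -1" using Yz by (simp add: lam_def)
        finally show ?thesis using xs(2) by simp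
      qed
      ultimately have False using ub by fastforce
      then show ?thesis ..
    qed
  qed
qed




lemma sigma_finite:
  assumes ne: "X \<noteq> {}" and fin: "sigmaX X z < \<infinity>"
  shows "sigmaX X z = ereal (real_of_ereal (sigmaX X z))"
    and "\<forall>x\<in>X. z \<bullet> x \<le> real_of_ereal (sigmaX X z)"
    and "\<forall>\<epsilon>>0. \<exists>x\<in>X. real_of_ereal (sigmaX X z) - \<epsilon> < z \<bullet> x"
proof -
  obtain x0 where x0: "x0 \<in> X" using ne by blast
  have up: "ereal (z \<bullet> x) \<le> sigmaX X z" if "x \<in> X" for x
    unfolding sigmaX_def using that by (rule SUP_upper)
  have "sigmaX X z \<noteq> -\<infinity>" using up[OF x0] by auto
  then obtain r where r: "sigmaX X z = ereal r" using fin by (cases "sigmaX X z") auto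
  show "sigmaX X z = ereal (real_of_ereal (sigmaX X z))" using r by simp
  show "\<forall>x\<in>X. z \<bullet> x \<le> real_of_ereal (sigmaX X z)" using up r by auto
  show "\<forall>\<epsilon>>0. \<exists>x\<in>X. real_of_ereal (sigmaX X z) - \<epsilon> < z \<bullet> x"
  proof (intro allI impI)
    fix e :: real assume "0 < e"
    then have "ereal (r - e) < (SUP x\<in>X. ereal (z \<bullet> x))" using r by (simp add: sigmaX_def)
    then obtain x where "x \<in> X" "ereal (r - e) < ereal (z \<bullet> x)" by (auto simp: less_SUP_iff)
    then show "\<exists>x\<in>X. real_of_ereal (sigmaX X z) - e < z \<bullet> x" using r by auto
  qed
qed

lemma sigma_cert:
  fixes aa :: "'h \<Rightarrow> 'a::euclidean_space"
  assumes F: "finite F" and X: "X = {x. \<forall>h\<in>F. aa h \<bullet> x \<le> bb h}" and ne: "X \<noteq> {}"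
    and fin: "sigmaX X z < \<infinity>"
  shows "\<exists>xs\<in>X. \<exists>\<mu>. (\<forall>h\<in>F. 0 \<le> \<mu> h) \<and> z = (\<Sum>h\<in>F. \<mu> h *\<^sub>R aa h) \<and> (\<forall>h\<in>F. \<mu> h \<noteq> 0 \<longrightarrow> aa h \<bullet> xs = bb h)"
proof -
  note sf = sigma_finite[OF ne fin]
  obtain xs where xs: "xs \<in> X" "z \<bullet> xs = real_of_ereal (sigmaX X z)"
    using lp_attain[OF F X ne sf(2) sf(3)] by blast
  show ?thesis using lp_dual[OF F X sf(2) xs] xs(1) by blast
qed

lemma sigma_eval:
  fixes aa :: "'h \<Rightarrow> 'a::euclidean_space"
  assumes X: "X = {x. \<forall>h\<in>F. aa h \<bullet> x \<le> bb h}" and xs: "xs \<in> X"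
    and mu: "\<forall>h\<in>F. 0 \<le> \<mu> h" and z: "z = (\<Sum>h\<in>F. \<mu> h *\<^sub>R aa h)"
    and cs: "\<forall>h\<in>F. \<mu> h \<noteq> 0 \<longrightarrow> aa h \<bullet> xs = bb h"
  shows "sigmaX X z = ereal (\<Sum>h\<in>F. \<mu> h * bb h)"
  unfolding sigmaX_def
proof (rule antisym)
  show "(SUP x\<in>X. ereal (z \<bullet> x)) \<le> ereal (\<Sum>h\<in>F. \<mu> h * bb h)"
  proof (rule SUP_least)
    fix x assume "x \<in> X"
    have "z \<bullet> x = (\<Sum>h\<in>F. \<mu> h * (aa h \<bullet> x))" by (simp add: z inner_sum_left)
    also have "\<dots> \<le> (\<Sum>h\<in>F. \<mu> h * bb h)"
      using \<open>x \<in> X\<close> mu X by (intro sum_mono mult_left_mono) auto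
    finally show "ereal (z \<bullet> x) \<le> ereal (\<Sum>h\<in>F. \<mu> h * bb h)" by simp
  qed
next
  have "z \<bullet> xs = (\<Sum>h\<in>F. \<mu> h * (aa h \<bullet> xs))" by (simp add: z inner_sum_left)
  also have "\<dots> = (\<Sum>h\<in>F. \<mu> h * bb h)"
    using cs by (intro sum.cong) auto
  finally show "ereal (\<Sum>h\<in>F. \<mu> h * bb h) \<le> (SUP x\<in>X. ereal (z \<bullet> x))"
    using xs by (metis SUP_upper)
qed

lemma small_eps:
  assumes "finite S"
  shows "\<exists>\<epsilon>>0. \<forall>s\<in>S. 0 < p s \<longrightarrow> \<epsilon> * \<bar>q s\<bar> \<le> (p s :: real)"
  using assms
proof (induction S rule: finite_induct)
  case empty then show ?case by (intro exI[of _ 1]) auto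
next
  case (insert x S)
  then obtain e where e: "0 < e" "\<forall>s\<in>S. 0 < p s \<longrightarrow> e * \<bar>q s\<bar> \<le> p s" by blast
  show ?case
  proof (cases "0 < p x")
    case False then show ?thesis using e by auto
  next
    case True
    define e' where "e' = min e (p x / (\<bar>q x\<bar> + 1))"
    have e'pos: "0 < e'" using e True by (simp add: e'_def)
    have "e' * \<bar>q x\<bar> \<le> p x / (\<bar>q x\<bar> + 1) * \<bar>q x\<bar>"
      by (intro mult_right_mono) (auto simp: e'_def)
    also have "\<dots> \<le> p x" using True by (simp add: field_simps)
    finally have x: "e' * \<bar>q x\<bar> \<le> p x" .
    have "\<forall>s\<in>S. 0 < p s \<longrightarrow> e' * \<bar>q s\<bar> \<le> p s"
    proof (intro ballI impI)
      fix s assume "s \<in> S" "0 < p s"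
      have "e' * \<bar>q s\<bar> \<le> e * \<bar>q s\<bar>" by (intro mult_right_mono) (auto simp: e'_def)
      then show "e' * \<bar>q s\<bar> \<le> p s" using e(2) \<open>s \<in> S\<close> \<open>0 < p s\<close> by fastforce
    qed
    then show ?thesis using x e'pos by auto
  qed
qed

lemma Amap_lin:
  "Amap A (\<lambda>a. p a + r * q a) = Amap A p + r *\<^sub>R Amap A q"
  by (simp add: Amap_def scaleR_add_left sum.distrib scaleR_sum_right)

lemma Amap_diff:
  "Amap A (\<lambda>a. p a - q a) = Amap A p - Amap A q"
  by (simp add: Amap_def scaleR_diff_left sum_subtractf)




lemma finite_Lambda:
  fixes X :: "'a::euclidean_space set" and aa :: "'h \<Rightarrow> 'a"
  assumes F: "finite F" and X: "X = {x. \<forall>h\<in>F. aa h \<bullet> x \<le> bb h}" and ne: "X \<noteq> {}"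
    and A: "finite A"
  shows "finite (Lambda_X X A)"
proof -
  let ?L = "Lambda_X X A"
  have "\<forall>l\<in>?L. \<exists>b. b \<in> A \<and> X_circuit X A b l \<and> l b = -1" by (auto simp: Lambda_X_def)
  from bchoice[OF this] obtain B where B: "\<forall>l\<in>?L. B l \<in> A \<and> X_circuit X A (B l) l \<and> l (B l) = -1"
    by blast
  have "\<forall>l\<in>?L. \<exists>p. fst p \<in> X \<and> (\<forall>h\<in>F. 0 \<le> snd p h) \<and> - Amap A l = (\<Sum>h\<in>F. snd p h *\<^sub>R aa h)
      \<and> (\<forall>h\<in>F. snd p h \<noteq> 0 \<longrightarrow> aa h \<bullet> fst p = bb h)"
  proof
    fix l assume "l \<in> ?L"
    then have "sigmaX X (- Amap A l) < \<infinity>" using B by (auto simp: X_circuit_def)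
    from sigma_cert[OF F X ne this] show "\<exists>p. fst p \<in> X \<and> (\<forall>h\<in>F. 0 \<le> snd p h) \<and> - Amap A l = (\<Sum>h\<in>F. snd p h *\<^sub>R aa h)
      \<and> (\<forall>h\<in>F. snd p h \<noteq> 0 \<longrightarrow> aa h \<bullet> fst p = bb h)" by auto
  qed
  from bchoice[OF this] obtain P where P: "\<forall>l\<in>?L. fst (P l) \<in> X \<and> (\<forall>h\<in>F. 0 \<le> snd (P l) h) \<and> - Amap A l = (\<Sum>h\<in>F. snd (P l) h *\<^sub>R aa h)
      \<and> (\<forall>h\<in>F. snd (P l) h \<noteq> 0 \<longrightarrow> aa h \<bullet> fst (P l) = bb h)"
    by blast
  define sig where "sig l = (B l, {a\<in>A. l a = 0}, {h\<in>F. snd (P l) h = 0})" for l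
  have "sig ` ?L \<subseteq> A \<times> Pow A \<times> Pow F" using B by (auto simp: sig_def)
  moreover have "finite (A \<times> Pow A \<times> Pow F)" using A F by simp
  ultimately have fin: "finite (sig ` ?L)" by (rule finite_subset)
  have "inj_on sig ?L"
  proof (rule inj_onI, rule ccontr)
    fix l l' assume l: "l \<in> ?L" and l': "l' \<in> ?L" and eq: "sig l = sig l'" and ne': "l \<noteq> l'"
    define b where "b = B l"
    have bl': "B l' = b" using eq by (simp add: sig_def b_def)
    have Z: "{a\<in>A. l a = 0} = {a\<in>A. l' a = 0}" using eq by (simp add: sig_def)
    define \<mu> where "\<mu> = snd (P l)"
    define \<mu>' where "\<mu>' = snd (P l')"
    define xs where "xs = fst (P l)"
    have ZM: "{h\<in>F. \<mu> h = 0} = {h\<in>F. \<mu>' h = 0}" using eq by (simp add: sig_def \<mu>_def \<mu>'_def)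
    have circ: "X_circuit X A b l" and lb: "l b = -1" and bA: "b \<in> A" using B l by (auto simp: b_def)
    have circ': "X_circuit X A b l'" and lb': "l' b = -1" using B l' bl' by auto
    have lN: "l \<in> Nbeta A b" using circ by (simp add: X_circuit_def)
    have lN': "l' \<in> Nbeta A b" using circ' by (simp add: X_circuit_def)
    have xs: "xs \<in> X" and mu: "\<forall>h\<in>F. 0 \<le> \<mu> h" and zl: "- Amap A l = (\<Sum>h\<in>F. \<mu> h *\<^sub>R aa h)"
      and csl: "\<forall>h\<in>F. \<mu> h \<noteq> 0 \<longrightarrow> aa h \<bullet> xs = bb h"
      using P l by (auto simp: \<mu>_def xs_def)
    have mu': "\<forall>h\<in>F. 0 \<le> \<mu>' h" and zl': "- Amap A l' = (\<Sum>h\<in>F. \<mu>' h *\<^sub>R aa h)"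
      using P l' by (auto simp: \<mu>'_def)
    define d where "d a = l' a - l a" for a
    define e where "e h = \<mu>' h - \<mu> h" for h
    obtain e1 where e1: "0 < e1" "\<forall>a\<in>A. 0 < l a \<longrightarrow> e1 * \<bar>d a\<bar> \<le> l a"
      using small_eps[OF A, of l d] by blast
    obtain e2 where e2: "0 < e2" "\<forall>h\<in>F. 0 < \<mu> h \<longrightarrow> e2 * \<bar>e h\<bar> \<le> \<mu> h"
      using small_eps[OF F, of \<mu> e] by blast
    define \<epsilon> where "\<epsilon> = min e1 e2"
    have eps: "0 < \<epsilon>" using e1 e2 by (simp add: \<epsilon>_def)
    define w where "w r = (\<lambda>a. l a + r * d a)" for r
    define m where "m r = (\<lambda>h. \<mu> h + r * e h)" for r
    have smallprod: "\<bar>r * t\<bar> \<le> p" if "\<bar>r\<bar> \<le> \<epsilon>" "ee * \<bar>t\<bar> \<le> p" "\<epsilon> \<le> ee" for r t p ee :: real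
    proof -
      have "\<bar>r * t\<bar> = \<bar>r\<bar> * \<bar>t\<bar>" by (simp add: abs_mult)
      also have "\<dots> \<le> ee * \<bar>t\<bar>" using that by (intro mult_right_mono) auto
      finally show ?thesis using that by simp
    qed
    have wN: "w r \<in> Nbeta A b" if r: "\<bar>r\<bar> \<le> \<epsilon>" for r
    proof -
      have "w r \<in> RA A" using lN lN' by (auto simp: Nbeta_def RA_def w_def d_def)
      moreover have "\<forall>a\<in>A. a \<noteq> b \<longrightarrow> 0 \<le> w r a"
      proof (intro ballI impI)
        fix a assume a: "a \<in> A" "a \<noteq> b"
        have la: "0 \<le> l a" using lN a by (auto simp: Nbeta_def)
        show "0 \<le> w r a"
        proof (cases "l a = 0")
          case True
          then have "l' a = 0" using Z a by blast
          then show ?thesis using True by (simp add: w_def d_def)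
        next
          case False
          then have "0 < l a" using la by simp
          then have "e1 * \<bar>d a\<bar> \<le> l a" using e1 a by blast
          then have "\<bar>r * d a\<bar> \<le> l a" using smallprod[OF r] by (simp add: \<epsilon>_def)
          then show ?thesis by (simp add: w_def)
        qed
      qed
      moreover have "sum (w r) A = 0"
      proof -
        have "sum (w r) A = sum l A + r * (sum l' A - sum l A)"
          by (simp add: w_def d_def sum.distrib sum_distrib_left[symmetric] sum_subtractf)
        then show ?thesis using lN lN' by (simp add: Nbeta_def)
      qed
      ultimately show ?thesis by (simp add: Nbeta_def)
    qed
    have sig_w: "sigmaX X (- Amap A (w r)) = ereal ((\<Sum>h\<in>F. \<mu> h * bb h) + r * (\<Sum>h\<in>F. e h * bb h))"
      if r: "\<bar>r\<bar> \<le> \<epsilon>" for r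
    proof -
      have m0: "\<forall>h\<in>F. 0 \<le> m r h"
      proof
        fix h assume h: "h \<in> F"
        show "0 \<le> m r h"
        proof (cases "\<mu> h = 0")
          case True
          then have "\<mu>' h = 0" using ZM h by blast
          then show ?thesis using True by (simp add: m_def e_def)
        next
          case False
          then have "0 < \<mu> h" using mu h by (auto simp: order_le_less)
          then have "e2 * \<bar>e h\<bar> \<le> \<mu> h" using e2 h by blast
          then have "\<bar>r * e h\<bar> \<le> \<mu> h" using smallprod[OF r] by (simp add: \<epsilon>_def)
          then show ?thesis by (simp add: m_def)
        qed
      qed
      have "Amap A (w r) = Amap A l + r *\<^sub>R (Amap A l' - Amap A l)"
        unfolding w_def d_def by (simp only: Amap_lin Amap_diff)
      then have "- Amap A (w r) = - Amap A l + r *\<^sub>R (- Amap A l' - - Amap A l)"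
        by (simp add: algebra_simps)
      also have "\<dots> = (\<Sum>h\<in>F. m r h *\<^sub>R aa h)"
        by (simp add: zl zl' m_def e_def scaleR_add_left sum.distrib scaleR_sum_right
            scaleR_diff_left sum_subtractf algebra_simps)
      finally have zr: "- Amap A (w r) = (\<Sum>h\<in>F. m r h *\<^sub>R aa h)" .
      have cs: "\<forall>h\<in>F. m r h \<noteq> 0 \<longrightarrow> aa h \<bullet> xs = bb h"
      proof (intro ballI impI)
        fix h assume h: "h \<in> F" "m r h \<noteq> 0"
        have "\<mu> h \<noteq> 0"
        proof
          assume "\<mu> h = 0"
          then have "\<mu>' h = 0" using ZM h by blast
          then show False using h \<open>\<mu> h = 0\<close> by (simp add: m_def e_def)
        qed
        then show "aa h \<bullet> xs = bb h" using csl h by blast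
      qed
      have "sigmaX X (- Amap A (w r)) = ereal (\<Sum>h\<in>F. m r h * bb h)"
        by (rule sigma_eval[OF X xs m0 zr cs])
      also have "(\<Sum>h\<in>F. m r h * bb h) = (\<Sum>h\<in>F. \<mu> h * bb h) + r * (\<Sum>h\<in>F. e h * bb h)"
        by (simp add: m_def algebra_simps sum.distrib sum_distrib_left)
      finally show ?thesis .
    qed
    define v1 where "v1 = w \<epsilon>"
    define v2 where "v2 = w (- \<epsilon>)"
    have v1N: "v1 \<in> Nbeta A b" using wN eps by (simp add: v1_def)
    have v2N: "v2 \<in> Nbeta A b" using wN eps by (simp add: v2_def)
    have db: "d b = 0" using lb lb' by (simp add: d_def)
    have dnz: "\<exists>a. d a \<noteq> 0"
    proof (rule ccontr)
      assume "\<not> (\<exists>a. d a \<noteq> 0)"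
      then have "l = l'" by (auto simp: d_def fun_eq_iff)
      then show False using ne' by simp
    qed
    have np: "\<not> proportional v1 v2"
    proof
      assume "proportional v1 v2"
      have v1b: "v1 b = -1" and v2b: "v2 b = -1" using lb db by (simp_all add: v1_def v2_def w_def)
      have "\<forall>a. v1 a = v2 a"
        using \<open>proportional v1 v2\<close> unfolding proportional_def
      proof
        assume "\<exists>c. v1 = (\<lambda>a. c * v2 a)"
        then obtain c where c: "v1 = (\<lambda>a. c * v2 a)" by blast
        then have "v1 b = c * v2 b" by simp
        then have "c = 1" using v1b v2b by simp
        then show ?thesis using c by simp
      next
        assume "\<exists>c. v2 = (\<lambda>a. c * v1 a)"
        then obtain c where c: "v2 = (\<lambda>a. c * v1 a)" by blast
        then have "v2 b = c * v1 b" by simp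
        then have "c = 1" using v1b v2b by simp
        then show ?thesis using c by simp
      qed
      then have "\<forall>a. d a = 0" using eps by (simp add: v1_def v2_def w_def)
      then show False using dnz by blast
    qed
    have mid: "l = (\<lambda>a. (1/2) * v1 a + (1 - 1/2) * v2 a)"
      by (simp add: fun_eq_iff v1_def v2_def w_def algebra_simps)
    have aff: "sigma_affine_on_segment X A v1 v2"
      unfolding sigma_affine_on_segment_def
    proof
      fix t :: real assume t: "t \<in> {0..1}"
      have pt: "(\<lambda>a. (1 - t) * v1 a + t * v2 a) = w ((1 - 2 * t) * \<epsilon>)"
        by (simp add: fun_eq_iff v1_def v2_def w_def algebra_simps)
      have "\<bar>(1 - 2 * t) * \<epsilon>\<bar> \<le> \<epsilon>"
      proof -
        have "\<bar>1 - 2 * t\<bar> \<le> 1" using t by auto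
        then have "\<bar>1 - 2 * t\<bar> * \<epsilon> \<le> 1 * \<epsilon>" using eps by (intro mult_right_mono) auto
        then show ?thesis using eps by (simp add: abs_mult)
      qed
      note s0 = sig_w[OF this]
      have s1: "sigmaX X (- Amap A v1) = ereal ((\<Sum>h\<in>F. \<mu> h * bb h) + \<epsilon> * (\<Sum>h\<in>F. e h * bb h))"
        using sig_w[of \<epsilon>] eps by (simp add: v1_def)
      have s2: "sigmaX X (- Amap A v2) = ereal ((\<Sum>h\<in>F. \<mu> h * bb h) + (- \<epsilon>) * (\<Sum>h\<in>F. e h * bb h))"
        using sig_w[of "- \<epsilon>"] eps by (simp add: v2_def)
      show "sigmaX X (- Amap A (\<lambda>a. (1 - t) * v1 a + t * v2 a)) =
          ereal (1 - t) * sigmaX X (- Amap A v1) + ereal t * sigmaX X (- Amap A v2)"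
        unfolding pt s0 s1 s2 by (simp add: algebra_simps)
    qed
    have "\<exists>v1\<in>Nbeta A b. \<exists>v2\<in>Nbeta A b. \<not> proportional v1 v2 \<and>
          (\<exists>\<theta>::real. 0 < \<theta> \<and> \<theta> < 1 \<and> l = (\<lambda>a. \<theta> * v1 a + (1 - \<theta>) * v2 a)) \<and>
          sigma_affine_on_segment X A v1 v2"
      using v1N v2N np mid aff by (intro bexI[of _ v1] bexI[of _ v2] conjI exI[of _ "1/2"]) auto
    then show False using circ by (simp add: X_circuit_def)
  qed
  then show ?thesis using fin finite_image_iff by blast
qed




theorem lemma5p12:
  fixes X :: "'a::euclidean_space set" and A :: "'a set" and L :: "('a \<Rightarrow> real) set"
  assumes "X \<noteq> {}" and "closed X" and "convex X" and "polyhedron X"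
    and "finite A" and "A \<noteq> {}" and "exp_lin_indep X A"
    and "L \<subset> Lambda_star X A"
  shows "\<exists>y\<in>RA A. (\<forall>l'\<in>L. phi X A l' y \<ge> 0) \<and> (\<exists>l\<in>Lambda_star X A - L. phi X A l y < 0)"
proof -
  note A = assms(5)
  from assms(4) obtain FF where FF: "finite FF" "X = \<Inter>FF" "\<forall>h\<in>FF. \<exists>a b. a \<noteq> 0 \<and> h = {x. a \<bullet> x \<le> b}"
    by (auto simp: polyhedron_def)
  have "\<forall>h\<in>FF. \<exists>p. h = {x. fst p \<bullet> x \<le> snd p}" using FF(3) by fastforce
  from bchoice[OF this] obtain AB where AB: "\<forall>h\<in>FF. h = {x. fst (AB h) \<bullet> x \<le> snd (AB h)}" by blast
  define aa where "aa h = fst (AB h)" for h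
  define bb where "bb h = snd (AB h)" for h
  have X: "X = {x. \<forall>h\<in>FF. aa h \<bullet> x \<le> bb h}"
  proof -
    have "\<Inter>FF = {x. \<forall>h\<in>FF. aa h \<bullet> x \<le> bb h}"
    proof safe
      fix x h assume "x \<in> \<Inter>FF" "h \<in> FF"
      then show "aa h \<bullet> x \<le> bb h" using AB by (auto simp: aa_def bb_def)
    next
      fix x h assume "\<forall>h\<in>FF. aa h \<bullet> x \<le> bb h" "h \<in> FF"
      then show "x \<in> h" using AB by (auto simp: aa_def bb_def)
    qed
    then show ?thesis using FF(2) by simp
  qed
  have finL: "finite (Lambda_X X A)" by (rule finite_Lambda[OF FF(1) X assms(1) A])
  have LS: "Lambda_star X A \<subseteq> Lambda_X X A" by (auto simp: Lambda_star_def)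
  have LL: "L \<subseteq> Lambda_X X A" using assms(8) LS by blast
  have finLL: "finite L" using LL finL finite_subset by blast
  obtain l where l: "l \<in> Lambda_star X A" "l \<notin> L" using assms(8) by blast
  have lL: "l \<in> Lambda_X X A" using l LS by auto
  obtain b where b: "b \<in> A" "X_circuit X A b l" "l b = -1" using lL by (auto simp: Lambda_X_def)
  have lN: "l \<in> Nbeta A b" using b by (simp add: X_circuit_def)
  have ext: "extreme_ray (ray (phi_vec X A l)) (circuit_graph X A)" using l(1) by (simp add: Lambda_star_def)
  have inRA: "s \<in> RA A" if "s \<in> Lambda_X X A" for s
    using that by (auto simp: Lambda_X_def X_circuit_def Nbeta_def)
  define sr where "sr s = real_of_ereal (sigmaX X (- Amap A s))" for s
  have pv: "phi_vec X A s = (s, sr s)" for s by (simp add: phi_vec_def sr_def)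
  define J where "J = insert None (Some ` A)"
  define I where "I = insert None (Some ` L)"
  define cp where "cp p j = (case j of None \<Rightarrow> snd p | Some a \<Rightarrow> fst p a)" for p :: "('a\<Rightarrow>real)\<times>real" and j
  define gen where "gen i = (case i of None \<Rightarrow> ((\<lambda>_. 0::real), 1::real) | Some s \<Rightarrow> phi_vec X A s)" for i
  have sumJ: "(\<Sum>j\<in>J. y j * cp p j) = y None * snd p + (\<Sum>a\<in>A. y (Some a) * fst p a)" for y p
    by (simp add: J_def sum_opt[OF A] cp_def)
  have nc: "\<not> (\<exists>c. (\<forall>i\<in>I. 0 \<le> c i) \<and> (\<forall>j\<in>J. cp (phi_vec X A l) j = (\<Sum>i\<in>I. c i * cp (gen i) j)))"
  proof
    assume "\<exists>c. (\<forall>i\<in>I. 0 \<le> c i) \<and> (\<forall>j\<in>J. cp (phi_vec X A l) j = (\<Sum>i\<in>I. c i * cp (gen i) j))"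
    then obtain c where c0: "\<forall>i\<in>I. 0 \<le> c i" and c: "\<forall>j\<in>J. cp (phi_vec X A l) j = (\<Sum>i\<in>I. c i * cp (gen i) j)"
      by blast
    have eqA: "l a = (\<Sum>s\<in>L. c (Some s) * s a)" if "a \<in> A" for a
    proof -
      have "cp (phi_vec X A l) (Some a) = (\<Sum>i\<in>I. c i * cp (gen i) (Some a))" using c that by (simp add: J_def)
      then show ?thesis by (simp add: I_def sum_opt[OF finLL] cp_def gen_def pv)
    qed
    have eqS: "sr l = c None + (\<Sum>s\<in>L. c (Some s) * sr s)"
    proof -
      have "cp (phi_vec X A l) None = (\<Sum>i\<in>I. c i * cp (gen i) None)" using c by (simp add: J_def)
      then show ?thesis by (simp add: I_def sum_opt[OF finLL] cp_def gen_def pv)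
    qed
    have cpos: "\<forall>s\<in>L. 0 \<le> c (Some s)" and cN: "0 \<le> c None" using c0 by (auto simp: I_def)
    show False
    proof (cases "\<exists>s\<in>L. 0 < c (Some s)")
      case False
      then have "\<forall>s\<in>L. c (Some s) = 0" using cpos by force
      then have "l b = 0" using eqA[OF b(1)] by simp
      then show False using b(3) by simp
    next
      case True
      then obtain s where s: "s \<in> L" "0 < c (Some s)" by blast
      define k where "k = c (Some s)"
      have sL: "s \<in> Lambda_X X A" using s LL by blast
      define u where "u = ((\<lambda>a. k * s a), k * sr s)"
      define v where "v = ((\<lambda>a. \<Sum>t\<in>L - {s}. c (Some t) * t a), (\<Sum>t\<in>L - {s}. c (Some t) * sr t) + c None)"
      have uG: "u \<in> circuit_graph X A"
        unfolding circuit_graph_def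
        using sL s(2) by (intro CollectI exI[of _ "{s}"] exI[of _ "\<lambda>_. k"] exI[of _ 0])
          (auto simp: u_def pv k_def)
      have vG: "v \<in> circuit_graph X A"
        unfolding circuit_graph_def
        using LL finLL cpos cN
        by (intro CollectI exI[of _ "L - {s}"] exI[of _ "\<lambda>t. c (Some t)"] exI[of _ "c None"])
          (auto simp: v_def pv)
      have "padd u v = phi_vec X A l"
      proof -
        have "k * s a + (\<Sum>t\<in>L - {s}. c (Some t) * t a) = l a" for a
        proof (cases "a \<in> A")
          case True
          then show ?thesis using eqA[OF True] sum.remove[OF finLL s(1), of "\<lambda>t. c (Some t) * t a"]
            by (simp add: k_def)
        next
          case False
          have "l a = 0" using lN False by (auto simp: Nbeta_def RA_def)
          moreover have "\<forall>t\<in>L. t a = 0" using inRA LL False by (auto simp: RA_def)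
          moreover have "(\<Sum>t\<in>L - {s}. c (Some t) * t a) = 0"
            using calculation(2) by (intro sum.neutral) auto
          ultimately show ?thesis using s(1) by simp
        qed
        moreover have "k * sr s + ((\<Sum>t\<in>L - {s}. c (Some t) * sr t) + c None) = sr l"
          using eqS sum.remove[OF finLL s(1), of "\<lambda>t. c (Some t) * sr t"] by (simp add: k_def)
        ultimately show ?thesis by (simp add: padd_def u_def v_def pv fun_eq_iff)
      qed
      moreover have "phi_vec X A l \<in> ray (phi_vec X A l)"
        unfolding ray_def by (intro CollectI exI[of _ 1]) (simp add: pv)
      ultimately have "u \<in> ray (phi_vec X A l)" using ext uG vG by (auto simp: extreme_ray_def)
      then obtain t where t: "0 \<le> t" "(\<lambda>a. k * s a) = (\<lambda>a. t * l a)"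
        by (auto simp: ray_def u_def pv)
      then have ta: "k * s a = t * l a" for a by metis
      obtain b' where b': "b' \<in> A" "X_circuit X A b' s" "s b' = -1" using sL by (auto simp: Lambda_X_def)
      have "b' = b"
      proof (rule ccontr)
        assume "b' \<noteq> b"
        then have "0 \<le> l b'" using lN b'(1) by (auto simp: Nbeta_def)
        then have "0 \<le> t * l b'" using t(1) by simp
        moreover have "k * s b' < 0" using b'(3) s(2) by (simp add: k_def)
        ultimately show False using ta[of b'] by simp
      qed
      then have "t = k" using ta[of b] b(3) b'(3) by simp
      then have "s = l" using ta s(2) by (auto simp: fun_eq_iff k_def)
      then show False using s(1) l(2) by simp
    qed
  qed
  have "finite I" "finite J" using finLL A by (auto simp: I_def J_def)
  from farkas_coord[OF this nc] obtain y where
    y: "\<forall>i\<in>I. 0 \<le> (\<Sum>j\<in>J. y j * cp (gen i) j)" "(\<Sum>j\<in>J. y j * cp (phi_vec X A l) j) < 0" by blast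
  have yN: "0 \<le> y None" using y(1) by (simp add: I_def sumJ gen_def)
  have yL: "0 \<le> y None * sr s + (\<Sum>a\<in>A. y (Some a) * s a)" if "s \<in> L" for s
    using y(1) that by (simp add: I_def sumJ gen_def pv)
  define G where "G = y None * sr l + (\<Sum>a\<in>A. y (Some a) * l a)"
  have G: "G < 0" using y(2) by (simp add: sumJ pv G_def)
  obtain x0 where x0: "x0 \<in> X" using assms(1) by blast
  have psi: "0 \<le> sr s + (\<Sum>a\<in>A. (a \<bullet> x0) * s a)" if "s \<in> Lambda_X X A" for s
  proof -
    have "sigmaX X (- Amap A s) < \<infinity>" using that by (auto simp: Lambda_X_def X_circuit_def)
    from sigma_finite(2)[OF assms(1) this] x0 have "(- Amap A s) \<bullet> x0 \<le> sr s" by (simp add: sr_def)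
    moreover have "(- Amap A s) \<bullet> x0 = - (\<Sum>a\<in>A. (a \<bullet> x0) * s a)"
      by (simp add: Amap_def inner_sum_left mult.commute)
    ultimately show ?thesis by simp
  qed
  define P where "P = sr l + (\<Sum>a\<in>A. (a \<bullet> x0) * l a)"
  have P: "0 \<le> P" using psi[OF lL] by (simp add: P_def)
  define \<epsilon> where "\<epsilon> = (if P = 0 then 1 else - G / (2 * P))"
  have eps: "0 < \<epsilon>" using P G by (auto simp: \<epsilon>_def divide_neg_pos)
  have epsP: "G + \<epsilon> * P < 0"
  proof (cases "P = 0")
    case True then show ?thesis using G by (simp add: \<epsilon>_def)
  next
    case False
    then have "\<epsilon> * P = - G / 2" by (simp add: \<epsilon>_def)
    then show ?thesis using G by simp
  qed
  define yf where "yf a = (if a \<in> A then (y (Some a) + \<epsilon> * (a \<bullet> x0)) / (y None + \<epsilon>) else 0)" for a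
  have den: "0 < y None + \<epsilon>" using yN eps by simp
  have yfRA: "yf \<in> RA A" by (simp add: RA_def yf_def)
  have phiform: "phi X A s yf = ((y None * sr s + (\<Sum>a\<in>A. y (Some a) * s a)) + \<epsilon> * (sr s + (\<Sum>a\<in>A. (a \<bullet> x0) * s a))) / (y None + \<epsilon>)" for s
  proof -
    have "(\<Sum>a\<in>A. yf a * s a) = (\<Sum>a\<in>A. (y (Some a) * s a + \<epsilon> * ((a \<bullet> x0) * s a)) / (y None + \<epsilon>))"
      by (intro sum.cong) (auto simp: yf_def algebra_simps add_divide_distrib)
    also have "\<dots> = ((\<Sum>a\<in>A. y (Some a) * s a) + \<epsilon> * (\<Sum>a\<in>A. (a \<bullet> x0) * s a)) / (y None + \<epsilon>)"
      by (simp add: sum_divide_distrib[symmetric] sum.distrib sum_distrib_left)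
    finally have "(\<Sum>a\<in>A. yf a * s a) = ((\<Sum>a\<in>A. y (Some a) * s a) + \<epsilon> * (\<Sum>a\<in>A. (a \<bullet> x0) * s a)) / (y None + \<epsilon>)" .
    then show ?thesis using den by (simp add: phi_def sr_def[symmetric] field_simps)
  qed
  have "\<forall>s\<in>L. 0 \<le> phi X A s yf"
  proof
    fix s assume s: "s \<in> L"
    have "0 \<le> (y None * sr s + (\<Sum>a\<in>A. y (Some a) * s a)) + \<epsilon> * (sr s + (\<Sum>a\<in>A. (a \<bullet> x0) * s a))"
    proof -
      have p1: "0 \<le> sr s + (\<Sum>a\<in>A. (a \<bullet> x0) * s a)" using psi s LL by blast
      show ?thesis by (rule add_nonneg_nonneg[OF yL[OF s] mult_nonneg_nonneg]) (use eps p1 in auto)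
    qed
    then show "0 \<le> phi X A s yf" using den by (simp add: phiform)
  qed
  moreover have "phi X A l yf < 0"
    using epsP den by (simp add: phiform G_def[symmetric] P_def[symmetric] divide_neg_pos)
  ultimately show ?thesis using yfRA l by blast
qed


end
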